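(* Let $\mathcal{G}=(\mathcal{V}_A\cup\mathcal{V}_T,\mathcal{E},w)$ be a weighted bipartite graph with $|\mathcal{V}_A|\le|\mathcal{V}_T|$ having a maximum matching, and let $e^*\in A(\mathcal{G})$ be a bottleneck edge. Let $\{\delta_e\}_{e\in\mathcal{E}}$ be perturbations with perturbed weights $\bar w_e=w_e+\delta_e$ such that for every $x\in\mathcal{E}$: $\bar w_x>\bar w_{e^*}$ if and only if $w_x>w_{e^*}$, and $\bar w_x<\bar w_{e^*}$ if and only if $w_x<w_{e^*}$. Then the bottleneck assignment $e^*$ is robust to $\{\delta_e\}$, i.e. $e^*\in A(\bar{\mathcal{G}})$.
   Context: A weighted bipartite graph $\mathcal{G}=(\mathcal{V}_A\cup\mathcal{V}_T,\mathcal{E},w)$ has disjoint vertex sets $\mathcal{V}_A,\mathcal{V}_T$, edge set $\mathcal{E}\subseteq\mathcal{V}_A\times\mathcal{V}_T$ and real edge weights $w_e$. A matching is a set of pairwise non-adjacent edges; a maximum matching is a matching covering every vertex of $\mathcal{V}_A$. For a graph $H$ with a maximum matching, $b(H)=\min_M\max_{e\in M}w_e$ over its maximum matchings; a bottleneck edge of $H$ is an edge $e$ with $w_e=b(H)$ lying in some maximum matching $M$ with $\max_{e'\in M}w_{e'}=b(H)$; $A(H)$ is the set of bottleneck edges. The perturbed graph $\bar{\mathcal{G}}$ has the same vertices and edges as $\mathcal{G}$ and weights $\bar w_e$; $e^*$ is robust to the perturbation if $e^*\in A(\bar{\mathcal{G}})$. *)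

theory Defs
  imports Complex_Main
begin

definition is_matching :: "('a \<times> 'b) set \<Rightarrow> ('a \<times> 'b) set \<Rightarrow> bool" where
  "is_matching E M \<longleftrightarrow> M \<subseteq> E \<and>
     (\<forall>e\<in>M. \<forall>e'\<in>M. e \<noteq> e' \<longrightarrow> fst e \<noteq> fst e' \<and> snd e \<noteq> snd e')"

text \<open>Maximum matching in the paper's sense: a matching covering every vertex of VA.\<close>
definition is_max_matching :: "'a set \<Rightarrow> ('a \<times> 'b) set \<Rightarrow> ('a \<times> 'b) set \<Rightarrow> bool" where
  "is_max_matching VA E M \<longleftrightarrow> is_matching E M \<and> (\<forall>a\<in>VA. \<exists>e\<in>M. fst e = a)"

definition mweight :: "(('a \<times> 'b) \<Rightarrow> real) \<Rightarrow> ('a \<times> 'b) set \<Rightarrow> real" where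
  "mweight w M = Max (w ` M)"

definition bottleneck_value ::
  "'a set \<Rightarrow> ('a \<times> 'b) set \<Rightarrow> (('a \<times> 'b) \<Rightarrow> real) \<Rightarrow> real" where
  "bottleneck_value VA E w = Min {mweight w M | M. is_max_matching VA E M}"

definition bottleneck_edges ::
  "'a set \<Rightarrow> ('a \<times> 'b) set \<Rightarrow> (('a \<times> 'b) \<Rightarrow> real) \<Rightarrow> ('a \<times> 'b) set" where
  "bottleneck_edges VA E w = {e. w e = bottleneck_value VA E w \<and>
     (\<exists>M. is_max_matching VA E M \<and> e \<in> M \<and> mweight w M = bottleneck_value VA E w)}"

end

theory Submission
  imports Defs
begin

theorem proposition2:
  fixes VA :: "'a set" and VT :: "'b set" and E :: "('a \<times> 'b) set"
    and w \<delta> :: "('a \<times> 'b) \<Rightarrow> real" and e_star :: "'a \<times> 'b"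
  assumes "finite VA" and "finite VT" and "E \<subseteq> VA \<times> VT"
    and "card VA \<le> card VT"
    and "\<exists>M. is_max_matching VA E M"
    and "e_star \<in> bottleneck_edges VA E w"
    and "\<forall>x\<in>E. (w x + \<delta> x > w e_star + \<delta> e_star) \<longleftrightarrow> (w x > w e_star)"
    and "\<forall>x\<in>E. (w x + \<delta> x < w e_star + \<delta> e_star) \<longleftrightarrow> (w x < w e_star)"
  shows "e_star \<in> bottleneck_edges VA E (\<lambda>e. w e + \<delta> e)"
proof -
  define w' where "w' = (\<lambda>e. w e + \<delta> e)"
  have finE: "finite E" using assms(1,2,3) by (meson finite_SigmaI finite_subset)
  have finS: "finite {mweight u M | M. is_max_matching VA E M}" for u
  proof -
    have "{mweight u M | M. is_max_matching VA E M} \<subseteq> mweight u ` Pow E"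
      by (auto simp: is_max_matching_def is_matching_def)
    thus ?thesis using finE by (meson finite_Pow_iff finite_imageI finite_subset)
  qed
  from assms(6) obtain M0 where M0: "is_max_matching VA E M0" "e_star \<in> M0"
    "mweight w M0 = bottleneck_value VA E w" and wb: "w e_star = bottleneck_value VA E w"
    by (auto simp: bottleneck_edges_def)
  have M0E: "M0 \<subseteq> E" using M0(1) by (simp add: is_max_matching_def is_matching_def)
  have eE: "e_star \<in> E" using M0 M0E by auto
  have finM: "finite M" if "M \<subseteq> E" for M using that finE finite_subset by blast
  have ne: "M \<noteq> {}" if "is_max_matching VA E M" for M
  proof -
    have "fst e_star \<in> VA" using eE assms(3) by auto
    then show ?thesis using that by (auto simp: is_max_matching_def)
  qed
  have ME: "M \<subseteq> E" if "is_max_matching VA E M" for M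
    using that by (simp add: is_max_matching_def is_matching_def)
  have le0: "w x \<le> w e_star" if "x \<in> M0" for x
  proof -
    have "w x \<le> mweight w M0" unfolding mweight_def using that finM[OF M0E] by simp
    thus ?thesis using M0(3) wb by simp
  qed
  have le0': "w' x \<le> w' e_star" if "x \<in> M0" for x
    using le0[OF that] assms(7) that M0E unfolding w'_def by force
  have m0: "mweight w' M0 = w' e_star"
    unfolding mweight_def
  proof (rule antisym)
    show "Max (w' ` M0) \<le> w' e_star"
      using finM[OF M0E] M0(2) le0' by (intro Max.boundedI) auto
    show "w' e_star \<le> Max (w' ` M0)"
      using finM[OF M0E] M0(2) by simp
  qed
  have lower: "w' e_star \<le> mweight w' M" if "is_max_matching VA E M" for M
  proof -
    have "bottleneck_value VA E w \<le> mweight w M"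
      unfolding bottleneck_value_def using finS that by (intro Min_le) auto
    moreover have "mweight w M \<in> w ` M" unfolding mweight_def
      using finM[OF ME[OF that]] ne[OF that] by simp
    ultimately obtain x where x: "x \<in> M" "w e_star \<le> w x" using wb by auto
    hence "w' e_star \<le> w' x" using assms(8) ME[OF that] unfolding w'_def by force
    also have "w' x \<le> mweight w' M" unfolding mweight_def
      using finM[OF ME[OF that]] x by simp
    finally show ?thesis .
  qed
  have bv: "bottleneck_value VA E w' = w' e_star"
    unfolding bottleneck_value_def
  proof (rule antisym)
    show "Min {mweight w' M |M. is_max_matching VA E M} \<le> w' e_star"
      using finS M0(1) m0 by (intro Min_le) (auto simp: m0[symmetric])
    show "w' e_star \<le> Min {mweight w' M |M. is_max_matching VA E M}"
      using finS M0(1) lower by (subst Min_ge_iff) auto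
  qed
  show ?thesis unfolding w'_def[symmetric] bottleneck_edges_def
    using bv M0 m0 by auto
qed

end
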